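(* Let $Q$ be a quandle. (1) If $Q$ is right orderable, then for all $x,y\in Q$ with $S_y(x)\neq x$, the orbit of $x$ under the cyclic group $\langle S_y\rangle$ is infinite. (2) If $Q$ is left orderable, then $Q$ is semi-latin and, for all $x\neq y$ in $Q$, the set $\{L_y^n(x)\}_{n=0,1,\ldots}$ is infinite, where $L_y^0(x)=x$ and $L_y^{i+1}(x)=y*(L_y^i(x))$ for $i\ge 0$.
   Context: A quandle is a non-empty set $Q$ with a binary operation $*$ such that $x*x=x$ for all $x$; for all $x,y$ there is a unique $z$ with $x=z*y$; and $(x*y)*z=(x*z)*(y*z)$ for all $x,y,z$. For $y\in Q$, $S_y:Q\to Q$ is the bijection $S_y(x)=x*y$, and $L_y:Q\to Q$ is the map $L_y(x)=y*x$. $Q$ is right orderable if there is a linear order $<$ on $Q$ such that $x<y$ implies $x*z<y*z$ for all $x,y,z$; left orderable if there is a linear order $<$ such that $x<y$ implies $z*x<z*y$ for all $x,y,z$. $Q$ is semi-latin if each $L_x$ is injective. *)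

theory Defs
  imports Main
begin

text \<open>A quandle structure on the whole type 'a with operation op (x * y = op x y).\<close>
definition quandle :: "('a \<Rightarrow> 'a \<Rightarrow> 'a) \<Rightarrow> bool" where
  "quandle op \<longleftrightarrow>
     (\<forall>x. op x x = x) \<and>
     (\<forall>x y. \<exists>!z. x = op z y) \<and>
     (\<forall>x y z. op (op x y) z = op (op x z) (op y z))"

definition S_map :: "('a \<Rightarrow> 'a \<Rightarrow> 'a) \<Rightarrow> 'a \<Rightarrow> 'a \<Rightarrow> 'a" where
  "S_map op y = (\<lambda>x. op x y)"

definition L_map :: "('a \<Rightarrow> 'a \<Rightarrow> 'a) \<Rightarrow> 'a \<Rightarrow> 'a \<Rightarrow> 'a" where
  "L_map op y = (\<lambda>x. op y x)"

definition int_pow :: "('a \<Rightarrow> 'a) \<Rightarrow> int \<Rightarrow> 'a \<Rightarrow> 'a" where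
  "int_pow f k = (if 0 \<le> k then f ^^ nat k else inv f ^^ nat (- k))"

definition cyc_orbit :: "('a \<Rightarrow> 'a) \<Rightarrow> 'a \<Rightarrow> 'a set" where
  "cyc_orbit f x = {int_pow f k x | k. True}"

definition right_orderable :: "('a \<Rightarrow> 'a \<Rightarrow> 'a) \<Rightarrow> bool" where
  "right_orderable op \<longleftrightarrow> (\<exists>R :: ('a \<times> 'a) set.
     linear_order R \<and> (\<forall>x y z. (x, y) \<in> R - Id \<longrightarrow> (op x z, op y z) \<in> R - Id))"

definition left_orderable :: "('a \<Rightarrow> 'a \<Rightarrow> 'a) \<Rightarrow> bool" where
  "left_orderable op \<longleftrightarrow> (\<exists>R :: ('a \<times> 'a) set.
     linear_order R \<and> (\<forall>x y z. (x, y) \<in> R - Id \<longrightarrow> (op z x, op z y) \<in> R - Id))"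

definition semi_latin :: "('a \<Rightarrow> 'a \<Rightarrow> 'a) \<Rightarrow> bool" where
  "semi_latin op \<longleftrightarrow> (\<forall>x. inj (L_map op x))"

end

theory Submission
  imports Defs
begin

lemma chain_inf:
  assumes tr: "trans P" and ir: "\<forall>a. (a,a) \<notin> P"
    and ch: "\<And>n. ((f^^n) x, (f^^Suc n) x) \<in> P"
  shows "infinite {(f^^n) x | n. True}"
proof -
  have lt: "m < n \<Longrightarrow> ((f^^m) x, (f^^n) x) \<in> P" for m n
  proof (induction n)
    case 0 then show ?case by simp
  next
    case (Suc n)
    show ?case
    proof (cases "m = n")
      case True then show ?thesis using ch by simp
    next
      case False
      then have "m < n" using Suc.prems by simp
      then show ?thesis using Suc.IH ch[of n] tr unfolding trans_def by blast
    qed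
  qed
  have "inj (\<lambda>n. (f^^n) x)"
  proof (rule injI)
    fix m n assume e: "(f^^m) x = (f^^n) x"
    show "m = n"
    proof (rule ccontr)
      assume "m \<noteq> n"
      then have "m < n \<or> n < m" by arith
      then show False using lt[of m n] lt[of n m] e ir by auto
    qed
  qed
  moreover have "{(f^^n) x | n. True} = range (\<lambda>n. (f^^n) x)" by auto
  ultimately show ?thesis using finite_imageD[of "\<lambda>n. (f^^n) x" UNIV] infinite_UNIV_nat by (metis inj_on_subset subset_UNIV)
qed

lemma mono_inf:
  assumes lin: "linear_order R"
    and mono: "\<forall>a b. (a,b) \<in> R - Id \<longrightarrow> (f a, f b) \<in> R - Id"
    and ne: "f x \<noteq> x"
  shows "infinite {(f^^n) x | n. True}"
proof -
  have trR: "trans R" and asR: "antisym R" and tot: "total_on UNIV R"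
    using lin unfolding linear_order_on_def partial_order_on_def preorder_on_def by auto
  have tr: "trans (R - Id)" using trR asR by (simp add: trans_diff_Id)
  have tot2: "(x, f x) \<in> R - Id \<or> (f x, x) \<in> R - Id"
    using tot ne unfolding total_on_def by auto
  show ?thesis
  proof (cases "(x, f x) \<in> R - Id")
    case True
    have "((f^^n) x, (f^^Suc n) x) \<in> R - Id" for n
    proof (induction n)
      case 0 then show ?case using True by simp
    next
      case (Suc n) then show ?case using mono by simp
    qed
    then show ?thesis using chain_inf[of "R - Id" f x] tr by auto
  next
    case False
    then have F: "(f x, x) \<in> R - Id" using tot2 by blast
    have "((f^^n) x, (f^^Suc n) x) \<in> (R - Id)\<inverse>" for n
    proof (induction n)
      case 0 then show ?case using F by simp
    next
      case (Suc n) then show ?case using mono by simp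
    qed
    moreover have "trans ((R - Id)\<inverse>)" using tr unfolding trans_def by blast
    ultimately show ?thesis using chain_inf[of "(R - Id)\<inverse>" f x] by auto
  qed
qed

theorem proposition3p7:
  fixes op :: "'a \<Rightarrow> 'a \<Rightarrow> 'a"
  assumes "quandle op"
  shows "(right_orderable op \<longrightarrow>
            (\<forall>x y. S_map op y x \<noteq> x \<longrightarrow> infinite (cyc_orbit (S_map op y) x)))
       \<and> (left_orderable op \<longrightarrow>
            semi_latin op \<and>
            (\<forall>x y. x \<noteq> y \<longrightarrow> infinite {(L_map op y ^^ n) x | n. True}))"
proof (intro conjI impI allI)
  fix x y
  assume ro: "right_orderable op" and ne: "S_map op y x \<noteq> x"
  obtain R where lin: "linear_order R"
    and m: "\<forall>a b z. (a, b) \<in> R - Id \<longrightarrow> (op a z, op b z) \<in> R - Id"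
    using ro unfolding right_orderable_def by blast
  have "\<forall>a b. (a,b) \<in> R - Id \<longrightarrow> (S_map op y a, S_map op y b) \<in> R - Id"
    using m unfolding S_map_def by blast
  then have inf: "infinite {(S_map op y^^n) x | n. True}" using mono_inf[OF lin, of "S_map op y" x] ne by blast
  have "{(S_map op y^^n) x | n. True} \<subseteq> cyc_orbit (S_map op y) x"
  proof clarify
    fix n
    have "(S_map op y^^n) x = int_pow (S_map op y) (int n) x" unfolding int_pow_def by simp
    then show "(S_map op y^^n) x \<in> cyc_orbit (S_map op y) x" unfolding cyc_orbit_def by blast
  qed
  then show "infinite (cyc_orbit (S_map op y) x)" using inf finite_subset by blast
next
  assume lo: "left_orderable op"
  obtain R where lin: "linear_order R"
    and m: "\<forall>a b z. (a, b) \<in> R - Id \<longrightarrow> (op z a, op z b) \<in> R - Id"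
    using lo unfolding left_orderable_def by blast
  have tot: "total_on UNIV R"
    using lin unfolding linear_order_on_def by auto
  have injL: "inj (L_map op z)" for z
  proof (rule injI)
    fix a b assume e: "L_map op z a = L_map op z b"
    show "a = b"
    proof (rule ccontr)
      assume "a \<noteq> b"
      then have dj: "(a,b) \<in> R - Id \<or> (b,a) \<in> R - Id" using tot unfolding total_on_def by auto
      have e': "op z a = op z b" using e unfolding L_map_def .
      show False
      proof (rule disjE[OF dj])
        assume "(a,b) \<in> R - Id"
        then have "(op z a, op z b) \<in> R - Id" using m by blast
        then show False using e' by simp
      next
        assume "(b,a) \<in> R - Id"
        then have "(op z b, op z a) \<in> R - Id" using m by blast
        then show False using e' by simp
      qed
    qed
  qed
  then show "semi_latin op" unfolding semi_latin_def by blast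
  fix x y :: 'a
  assume ne: "x \<noteq> y"
  have ne2: "L_map op y x \<noteq> x"
  proof
    assume h: "L_map op y x = x"
    have qi: "\<forall>x. op x x = x" using assms unfolding quandle_def by (rule conjunct1)
    have xx: "op x x = x" using qi by (rule spec)
    have yx: "op y x = op x x" using h xx unfolding L_map_def by simp
    have qu: "\<forall>x y. \<exists>!z. x = op z y" using assms unfolding quandle_def by (rule conjunct1[OF conjunct2])
    have ex: "\<exists>!z. op x x = op z x" using spec[OF spec[OF qu, of "op x x"], of x] .
    obtain w where w: "\<And>z. op x x = op z x \<Longrightarrow> z = w"
      using ex by (elim ex1E) blast
    have "y = w" using w[of y] yx by simp
    moreover have "x = w" using w[of x] by simp
    ultimately have "y = x" by simp
    then show False using ne by simp
  qed
  have "\<forall>a b. (a,b) \<in> R - Id \<longrightarrow> (L_map op y a, L_map op y b) \<in> R - Id"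
    using m unfolding L_map_def by blast
  then show "infinite {(L_map op y ^^ n) x | n. True}" using mono_inf[OF lin, of "L_map op y" x] ne2 by blast
qed

end
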